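(* Let $Y$ be a random variable whose moment generating function $E[e^{tY}]$ exists for $|t|<r_0$ for some $r_0>0$. Let $(Y_j)_{j\ge1}$ be mutually independent copies of $Y$, $S_0=0$, $S_k=Y_1+\cdots+Y_k$ for $k\ge1$. Let $r$ be a positive integer and define $\phi_{n,r}^Y(x,y)$ by $$\Big(1+y\big(E[e^{Yt}]-1\big)\Big)^{x}e^{rt}=\sum_{n=0}^{\infty}\phi_{n,r}^Y(x,y)\frac{t^n}{n!}.$$ Then for all integers $m,n\ge0$, $$\phi_{m+n,r}^Y(x,y)=\sum_{i=0}^{n}\sum_{k=0}^{m}\binom{n}{i}\phi_{i,r}^Y(x-k,y)\frac{(x)_k y^k}{k!}\sum_{j=k}^{m}\sum_{l_1+\cdots+l_k=j}\binom{m}{j}\binom{j}{l_1,\dots,l_k}r^{m-j}E\Big[S_k^{n-i}\prod_{p=1}^{k}Y_p^{l_p}\Big],$$ where the innermost sum runs over $k$-tuples $(l_1,\dots,l_k)$ of positive integers with sum $j$.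
   Context: $(x)_0=1$, $(x)_k=x(x-1)\cdots(x-k+1)$ for $k\ge1$. The power $(1+u)^x$ is understood via the binomial series $\sum_{k\ge0}\binom{x}{k}u^k$ and the defining identity is one of power series in $t$; $x,y$ are variables. For $k=0$ the sum over $(l_1,\dots,l_k)$ equals $1$ if $j=0$ and $0$ otherwise (empty product equal to $1$). $\binom{j}{l_1,\dots,l_k}$ is the multinomial coefficient. *)

theory Defs
  imports "HOL-Probability.Probability" "HOL-Computational_Algebra.Formal_Power_Series"
begin

definition falling_fact :: "real \<Rightarrow> nat \<Rightarrow> real" where
  "falling_fact x k = (\<Prod>i<k. x - real i)"

definition multinom :: "nat \<Rightarrow> nat \<Rightarrow> (nat \<Rightarrow> nat) \<Rightarrow> nat" where
  "multinom j k l = fact j div (\<Prod>p\<in>{1..k}. fact (l p))"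

text \<open>k-tuples (l_1,...,l_k) of positive integers with sum j, encoded as
  functions nat => nat vanishing outside {1..k}.\<close>
definition pos_comps :: "nat \<Rightarrow> nat \<Rightarrow> (nat \<Rightarrow> nat) set" where
  "pos_comps k j = {l. (\<forall>p\<in>{1..k}. 1 \<le> l p) \<and> (\<forall>p. p \<notin> {1..k} \<longrightarrow> l p = 0)
                        \<and> (\<Sum>p\<in>{1..k}. l p) = j}"

text \<open>Moment generating function E[e^{tY}] as a power series in t:
  its Taylor series at 0 is sum_n E[Y^n] t^n / n!.\<close>
definition mgf_fps :: "'a measure \<Rightarrow> ('a \<Rightarrow> real) \<Rightarrow> real fps" where
  "mgf_fps M Y = Abs_fps (\<lambda>n. (\<integral>\<omega>. Y \<omega> ^ n \<partial>M) / fact n)"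

text \<open>Generating series (1 + y (E[e^{Yt}] - 1))^x e^{rt}, where (1+u)^x is the
  binomial series composed with u (u has zero constant term).\<close>
definition phi_gen :: "'a measure \<Rightarrow> ('a \<Rightarrow> real) \<Rightarrow> nat \<Rightarrow> real \<Rightarrow> real \<Rightarrow> real fps" where
  "phi_gen M Y r x y =
     (fps_binomial x oo (fps_const y * (mgf_fps M Y - 1))) * fps_exp (real r)"

definition phi :: "'a measure \<Rightarrow> ('a \<Rightarrow> real) \<Rightarrow> nat \<Rightarrow> nat \<Rightarrow> real \<Rightarrow> real \<Rightarrow> real" where
  "phi M Y n r x y = fact n * fps_nth (phi_gen M Y r x y) n"

end

theory Submission imports Defs begin

unbundle no vec_syntax
unbundle fps_syntax

definition comps :: "nat set \<Rightarrow> nat \<Rightarrow> (nat \<Rightarrow> nat) set" where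
  "comps P a = {e. (\<forall>p. p \<notin> P \<longrightarrow> e p = 0) \<and> sum e P = a}"

lemma finite_comps:
  assumes "finite P" shows "finite (comps P a)"
proof -
  have "comps P a \<subseteq> {f. \<forall>x. (x \<in> P \<longrightarrow> f x \<in> {0..a}) \<and> (x \<notin> P \<longrightarrow> f x = 0)}"
  proof
    fix e assume e: "e \<in> comps P a"
    have "\<forall>x\<in>P. e x \<le> a"
      using e assms unfolding comps_def by (auto intro: member_le_sum[where f=e, simplified])
    then show "e \<in> {f. \<forall>x. (x \<in> P \<longrightarrow> f x \<in> {0..a}) \<and> (x \<notin> P \<longrightarrow> f x = 0)}"
      using e unfolding comps_def by auto
  qed
  then show ?thesis by (rule finite_subset) (intro finite_set_of_finite_funs assms, simp)
qed

lemma comps_empty: "comps {} a = (if a = 0 then {\<lambda>_. 0} else {})"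
  unfolding comps_def by auto

lemma fps_prod_nth:
  fixes F :: "nat \<Rightarrow> 'a::comm_ring_1 fps"
  assumes "finite P"
  shows "(\<Prod>p\<in>P. F p) $ a = (\<Sum>e\<in>comps P a. \<Prod>p\<in>P. F p $ e p)"
  using assms
proof (induction P arbitrary: a rule: finite_induct)
  case empty
  then show ?case by (simp add: comps_empty)
next
  case (insert q P)
  have "(\<Prod>p\<in>insert q P. F p) $ a = (\<Sum>b=0..a. F q $ b * (\<Prod>p\<in>P. F p) $ (a - b))"
    using insert by (simp add: fps_mult_nth)
  also have "\<dots> = (\<Sum>b=0..a. \<Sum>e\<in>comps P (a - b). F q $ b * (\<Prod>p\<in>P. F p $ e p))"
    using insert by (simp add: sum_distrib_left)
  also have "\<dots> = (\<Sum>be\<in>Sigma {0..a} (\<lambda>b. comps P (a - b)). F q $ fst be * (\<Prod>p\<in>P. F p $ snd be p))"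
    by (subst sum.Sigma) (auto intro: finite_comps insert.hyps simp: split_beta)
  also have "\<dots> = (\<Sum>e\<in>comps (insert q P) a. \<Prod>p\<in>insert q P. F p $ e p)"
  proof (rule sum.reindex_bij_witness[where j = "\<lambda>be. (snd be)(q := fst be)" and i = "\<lambda>e. (e q, e(q := 0))"])
    fix be assume be: "be \<in> Sigma {0..a} (\<lambda>b. comps P (a - b))"
    then obtain b e where [simp]: "be = (b, e)" and b: "b \<le> a" and e: "e \<in> comps P (a - b)" by auto
    have eq0: "e q = 0" using e insert unfolding comps_def by auto
    show "(fun_upd (snd be) q (fst be) q, fun_upd (fun_upd (snd be) q (fst be)) q 0) = be"
      using eq0 by auto
    have "sum (e(q := b)) P = sum e P"
      using insert by (intro sum.cong) auto
    then show "fun_upd (snd be) q (fst be) \<in> comps (insert q P) a"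
      using e b insert unfolding comps_def by auto
    have "(\<Prod>p\<in>P. F p $ (e(q := b)) p) = (\<Prod>p\<in>P. F p $ e p)"
      using insert by (intro prod.cong) auto
    then show "(\<Prod>p\<in>insert q P. F p $ fun_upd (snd be) q (fst be) p) = F q $ fst be * (\<Prod>p\<in>P. F p $ snd be p)"
      using insert by simp
  next
    fix e assume e: "e \<in> comps (insert q P) a"
    show "(e q, e(q := 0)) \<in> Sigma {0..a} (\<lambda>b. comps P (a - b))"
    proof -
      have s: "sum e (insert q P) = a" using e unfolding comps_def by auto
      have "sum (e(q := 0)) P = sum e P" using insert by (intro sum.cong) auto
      then show ?thesis using s e insert unfolding comps_def by auto
    qed
    show "fun_upd (snd (e q, e(q := 0))) q (fst (e q, e(q := 0))) = e" by auto
  qed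
  finally show ?case .
qed

lemma fps_exp_sum:
  fixes z :: "nat \<Rightarrow> real"
  assumes "finite P"
  shows "fps_exp (\<Sum>p\<in>P. z p) = (\<Prod>p\<in>P. fps_exp (z p))"
  using assms by (induction rule: finite_induct) (simp_all add: fps_exp_add_mult)

lemma power_sum_multinomial:
  fixes z :: "nat \<Rightarrow> real"
  assumes "finite P"
  shows "(\<Sum>p\<in>P. z p) ^ a = fact a * (\<Sum>e\<in>comps P a. \<Prod>p\<in>P. z p ^ e p / fact (e p))"
proof -
  have "(\<Sum>p\<in>P. z p) ^ a / fact a = fps_exp (\<Sum>p\<in>P. z p) $ a" by simp
  also have "\<dots> = (\<Sum>e\<in>comps P a. \<Prod>p\<in>P. z p ^ e p / fact (e p))"
    unfolding fps_exp_sum[OF assms] fps_prod_nth[OF assms] by simp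
  finally show ?thesis by (simp add: field_simps)
qed

lemma prod_fact_dvd:
  assumes "finite P"
  shows "(\<Prod>p\<in>P. fact (e p) :: nat) dvd fact (sum e P)"
  using assms
proof (induction rule: finite_induct)
  case empty then show ?case by simp
next
  case (insert q P)
  have "fact (e q) * (\<Prod>p\<in>P. fact (e p)) dvd (fact (e q) * fact (sum e P) :: nat)"
    using insert.IH by (auto intro: mult_dvd_mono)
  also have "\<dots> dvd fact (e q + sum e P)" by (rule fact_fact_dvd_fact)
  finally show ?case using insert by simp
qed

definition Qf :: "real fps \<Rightarrow> real fps fps" where
  "Qf M = Abs_fps (\<lambda>l. if l = 0 then 0 else fps_const (1 / fact l) * fps_nth_deriv l M)"

definition dt :: "real fps fps \<Rightarrow> real fps fps" where
  "dt F = Abs_fps (\<lambda>n. fps_deriv (F $ n))"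

lemma dt_nth [simp]: "dt F $ n = fps_deriv (F $ n)"
  by (simp add: dt_def)

lemma Qf_nth: "Qf M $ l = (if l = 0 then 0 else fps_const (1 / fact l) * fps_nth_deriv l M)"
  by (simp add: Qf_def)

lemma dt_mult: "dt (F * G) = dt F * G + F * dt G"
  by (rule fps_ext) (simp add: fps_mult_nth fps_deriv_sum sum.distrib)

lemma dt_power: "dt (F ^ Suc k) = of_nat (Suc k) * F ^ k * dt F"
proof (induction k)
  case 0
  then show ?case by simp
next
  case (Suc k)
  have "dt (F ^ Suc (Suc k)) = dt (F * F ^ Suc k)" by simp
  also have "\<dots> = dt F * F ^ Suc k + F * (of_nat (Suc k) * F ^ k * dt F)"
    unfolding dt_mult Suc ..
  also have "\<dots> = of_nat (Suc (Suc k)) * F ^ Suc k * dt F"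
    by (simp add: algebra_simps)
  finally show ?case .
qed

lemma dt_Q: "dt (Qf M) = fps_deriv (Qf M) - fps_const (fps_deriv M)"
proof (rule fps_ext)
  fix n
  show "dt (Qf M) $ n = (fps_deriv (Qf M) - fps_const (fps_deriv M)) $ n"
  proof (cases n)
    case 0
    then show ?thesis by (simp add: Qf_nth)
  next
    case (Suc n')
    have "dt (Qf M) $ n = fps_deriv (fps_const (1 / fact n) * fps_nth_deriv n M)"
      using Suc by (simp add: Qf_nth)
    also have "\<dots> = fps_const (1 / fact n) * fps_nth_deriv (Suc n) M"
      by (simp add: fps_nth_deriv_commute del: fps_nth_deriv.simps)
    also have "\<dots> = fps_const (of_nat (Suc n)) * fps_const (1 / fact (Suc n)) * fps_nth_deriv (Suc n) M"
      by (simp add: field_simps del: of_nat_Suc)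
    also have "\<dots> = (fps_deriv (Qf M) - fps_const (fps_deriv M)) $ n"
      using Suc by (simp add: Qf_nth fps_of_nat del: of_nat_Suc fps_nth_deriv.simps fps_const_mult)
    finally show ?thesis .
  qed
qed

lemma Q_power_deriv:
  "fps_deriv ((Qf M ^ Suc k) $ j) =
     of_nat (Suc j) * (Qf M ^ Suc k) $ Suc j - of_nat (Suc k) * fps_deriv M * (Qf M ^ k) $ j"
proof -
  let ?Q = "Qf M"
  have "dt (?Q ^ Suc k) = of_nat (Suc k) * ?Q ^ k * (fps_deriv ?Q - fps_const (fps_deriv M))"
    unfolding dt_power dt_Q by (rule refl)
  also have "\<dots> = fps_deriv (?Q ^ Suc k) - fps_const (of_nat (Suc k) * fps_deriv M) * ?Q ^ k"
  proof -
    have d: "fps_deriv (?Q ^ Suc k) = of_nat (Suc k) * fps_deriv ?Q * ?Q ^ k"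
      using fps_deriv_power'[of ?Q "Suc k"] by simp
    show ?thesis unfolding d fps_const_mult[symmetric] fps_of_nat
      by (simp add: algebra_simps fps_of_nat del: fps_const_mult)
  qed
  finally have "dt (?Q ^ Suc k) $ j = (fps_deriv (?Q ^ Suc k) - fps_const (of_nat (Suc k) * fps_deriv M) * ?Q ^ k) $ j"
    by simp
  then show ?thesis by (simp only: dt_nth fps_sub_nth fps_deriv_nth fps_mult_left_const_nth Suc_eq_plus1 mult.assoc)
qed

lemma Q_power_low: "j < k \<Longrightarrow> (Qf M ^ k) $ j = 0"
proof (induction k arbitrary: j)
  case 0
  then show ?case by simp
next
  case (Suc k)
  have "(Qf M ^ Suc k) $ j = (\<Sum>i=0..j. Qf M $ i * (Qf M ^ k) $ (j - i))"
    by (simp add: fps_mult_nth)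
  also have "\<dots> = 0"
  proof (intro sum.neutral ballI)
    fix i assume "i \<in> {0..j}"
    show "Qf M $ i * (Qf M ^ k) $ (j - i) = 0"
    proof (cases "i = 0")
      case True then show ?thesis by (simp add: Qf_nth)
    next
      case False then show ?thesis using Suc.IH[of "j - i"] Suc.prems \<open>i \<in> {0..j}\<close> by auto
    qed
  qed
  finally show ?case .
qed

lemma Q_power_0: "(Qf M ^ k) $ 0 = (if k = 0 then 1 else 0)"
  by (cases k) (simp_all add: Q_power_low Qf_nth)

definition Ak :: "real fps \<Rightarrow> real \<Rightarrow> real \<Rightarrow> nat \<Rightarrow> real fps" where
  "Ak M x y k = fps_binomial (x - real k) oo (fps_const y * (M - 1))"

definition ck :: "real \<Rightarrow> real \<Rightarrow> nat \<Rightarrow> real" where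
  "ck x y k = falling_fact x k * y ^ k / fact k"

definition Rk :: "real fps \<Rightarrow> nat \<Rightarrow> nat \<Rightarrow> real fps" where
  "Rk M k j = fps_const (fact j) * (Qf M ^ k) $ j"

lemma fps_binomial_deriv': "fps_deriv (fps_binomial c) = fps_const c * fps_binomial (c - 1)"
proof (rule fps_ext)
  fix n
  show "fps_deriv (fps_binomial c) $ n = (fps_const c * fps_binomial (c - 1)) $ n"
    using gbinomial_absorption[of n c] by (simp del: of_nat_Suc)
qed

lemma deriv_Ak:
  assumes "M $ 0 = 1"
  shows "fps_deriv (Ak M x y k) = fps_const ((x - real k) * y) * Ak M x y (Suc k) * fps_deriv M"
proof -
  let ?U = "fps_const y * (M - 1)"
  have U0: "?U $ 0 = 0" using assms by simp
  have "fps_deriv (Ak M x y k) = (fps_deriv (fps_binomial (x - real k)) oo ?U) * fps_deriv ?U"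
    unfolding Ak_def by (rule fps_compose_deriv[OF U0])
  also have "fps_deriv (fps_binomial (x - real k)) oo ?U = fps_const (x - real k) * Ak M x y (Suc k)"
    unfolding fps_binomial_deriv' Ak_def fps_const_mult_apply_left[symmetric]
    by (simp add: algebra_simps)
  finally show ?thesis by (simp add: algebra_simps)
qed

lemma Rk_low: "j < k \<Longrightarrow> Rk M k j = 0"
  by (simp add: Rk_def Q_power_low)

lemma deriv_Rk:
  "fps_deriv (Rk M k j) = Rk M k (Suc j) - fps_const (of_nat k) * fps_deriv M * Rk M (k - 1) j"
proof (cases k)
  case 0
  then show ?thesis by (simp add: Rk_def)
next
  case (Suc k')
  have "fps_deriv (Rk M k j) = fps_const (fact j) * fps_deriv ((Qf M ^ Suc k') $ j)"
    using Suc by (simp add: Rk_def)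
  also have "\<dots> = fps_const (fact j) * (of_nat (Suc j) * (Qf M ^ Suc k') $ Suc j
      - of_nat (Suc k') * fps_deriv M * (Qf M ^ k') $ j)"
    by (simp only: Q_power_deriv)
  also have "\<dots> = Rk M k (Suc j) - fps_const (of_nat k) * fps_deriv M * Rk M (k - 1) j"
    using Suc unfolding Rk_def
    by (simp add: algebra_simps fps_of_nat[symmetric] del: of_nat_Suc)
  finally show ?thesis .
qed

lemma ck_Suc: "ck x y (Suc k) * of_nat (Suc k) = ck x y k * ((x - real k) * y)"
  unfolding ck_def falling_fact_def by (simp add: lessThan_Suc field_simps del: of_nat_Suc)

lemma main_deriv:
  assumes M0: "M $ 0 = 1"
  shows "j \<le> N \<Longrightarrow> fps_nth_deriv j (Ak M x y 0) = (\<Sum>k\<le>N. fps_const (ck x y k) * Ak M x y k * Rk M k j)"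
proof (induction j arbitrary: N)
  case 0
  have "(\<Sum>k\<le>N. fps_const (ck x y k) * Ak M x y k * Rk M k 0) =
        (\<Sum>k\<le>N. if k = 0 then Ak M x y 0 else 0)"
    by (intro sum.cong) (auto simp: Rk_def Q_power_0 ck_def falling_fact_def)
  then show ?case by simp
next
  case (Suc j)
  then obtain N' where N: "N = Suc N'" by (cases N) auto
  let ?A = "Ak M x y" and ?c = "ck x y" and ?R = "Rk M" and ?D = "fps_deriv M"
  have "fps_nth_deriv (Suc j) (?A 0) = fps_deriv (\<Sum>k\<le>N. fps_const (?c k) * ?A k * ?R k j)"
    using Suc.IH[of N] Suc.prems by (simp add: fps_nth_deriv_commute del: fps_nth_deriv.simps)
  also have "\<dots> = (\<Sum>k\<le>N. fps_const (?c k) * fps_const ((x - real k) * y) * ?A (Suc k) * ?D * ?R k j)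
      + (\<Sum>k\<le>N. fps_const (?c k) * ?A k * ?R k (Suc j))
      - (\<Sum>k\<le>N. fps_const (?c k) * fps_const (of_nat k) * ?A k * ?D * ?R (k - 1) j)"
  proof -
    have "fps_deriv (fps_const (?c k) * ?A k * ?R k j) =
       fps_const (?c k) * fps_const ((x - real k) * y) * ?A (Suc k) * ?D * ?R k j
      + fps_const (?c k) * ?A k * ?R k (Suc j)
      - fps_const (?c k) * fps_const (of_nat k) * ?A k * ?D * ?R (k - 1) j" for k
      by (simp only: fps_deriv_mult fps_deriv_const deriv_Ak[OF M0] deriv_Rk) algebra
    then show ?thesis by (simp only: fps_deriv_sum sum.distrib sum_subtractf)
  qed
  also have "(\<Sum>k\<le>N. fps_const (?c k) * fps_const ((x - real k) * y) * ?A (Suc k) * ?D * ?R k j)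
      = (\<Sum>k\<le>N. fps_const (?c k) * fps_const (of_nat k) * ?A k * ?D * ?R (k - 1) j)"
  proof -
    have "(\<Sum>k\<le>N. fps_const (?c k) * fps_const (of_nat k) * ?A k * ?D * ?R (k - 1) j)
        = (\<Sum>k\<le>N'. fps_const (?c (Suc k)) * fps_const (of_nat (Suc k)) * ?A (Suc k) * ?D * ?R k j)"
      unfolding N sum.atMost_Suc_shift by simp
    also have "\<dots> = (\<Sum>k\<le>N'. fps_const (?c k) * fps_const ((x - real k) * y) * ?A (Suc k) * ?D * ?R k j)"
      by (intro sum.cong refl) (simp only: fps_const_mult ck_Suc)
    also have "\<dots> = (\<Sum>k\<le>N. fps_const (?c k) * fps_const ((x - real k) * y) * ?A (Suc k) * ?D * ?R k j)"
      using Suc.prems unfolding N by (simp add: Rk_low)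
    finally show ?thesis by simp
  qed
  finally show ?case by simp
qed

lemma deriv_mult_exp:
  fixes F :: "real fps"
  shows "fps_nth_deriv m (F * fps_exp c) =
    (\<Sum>j\<le>m. fps_const (of_nat (m choose j) * c ^ (m - j)) * fps_nth_deriv j F) * fps_exp c"
proof (induction m)
  case 0
  then show ?case by simp
next
  case (Suc m)
  let ?S = "\<lambda>m. (\<Sum>j\<le>m. fps_const (of_nat (m choose j) * c ^ (m - j)) * fps_nth_deriv j F)"
  have d: "fps_deriv (?S m) = (\<Sum>j\<le>m. fps_const (of_nat (m choose j) * c ^ (m - j)) * fps_nth_deriv (Suc j) F)"
    by (simp add: fps_deriv_sum fps_nth_deriv_commute del: fps_nth_deriv.simps)
  have cS: "fps_const c * ?S m = fps_const (c ^ Suc m) * F +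
      (\<Sum>j\<le>m. fps_const (of_nat (m choose Suc j) * c ^ (m - j)) * fps_nth_deriv (Suc j) F)"
  proof -
    have "fps_const c * ?S m = (\<Sum>j\<le>m. fps_const (of_nat (m choose j) * c ^ (Suc m - j)) * fps_nth_deriv j F)"
      unfolding sum_distrib_left
      by (intro sum.cong refl) (simp add: Suc_diff_le mult_ac)
    also have "\<dots> = (\<Sum>j\<le>Suc m. fps_const (of_nat (m choose j) * c ^ (Suc m - j)) * fps_nth_deriv j F)"
      by simp
    also have "\<dots> = fps_const (c ^ Suc m) * F +
      (\<Sum>j\<le>m. fps_const (of_nat (m choose Suc j) * c ^ (m - j)) * fps_nth_deriv (Suc j) F)"
      unfolding sum.atMost_Suc_shift by simp
    finally show ?thesis .
  qed
  have S': "?S (Suc m) = fps_const (c ^ Suc m) * F +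
      (\<Sum>j\<le>m. fps_const (of_nat (m choose j) * c ^ (m - j)) * fps_nth_deriv (Suc j) F) +
      (\<Sum>j\<le>m. fps_const (of_nat (m choose Suc j) * c ^ (m - j)) * fps_nth_deriv (Suc j) F)"
  proof -
    have "?S (Suc m) = fps_const (c ^ Suc m) * F +
      (\<Sum>j\<le>m. fps_const (of_nat (m choose j) * c ^ (m - j)) * fps_nth_deriv (Suc j) F +
        fps_const (of_nat (m choose Suc j) * c ^ (m - j)) * fps_nth_deriv (Suc j) F)"
      unfolding sum.atMost_Suc_shift
      by (simp add: fps_const_add[symmetric] distrib_right del: fps_const_add fps_nth_deriv.simps(2))
    then show ?thesis by (simp only: sum.distrib add.assoc)
  qed
  have "fps_nth_deriv (Suc m) (F * fps_exp c) = fps_deriv (?S m * fps_exp c)"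
    using Suc by (simp add: fps_nth_deriv_commute del: fps_nth_deriv.simps)
  also have "\<dots> = (fps_deriv (?S m) + fps_const c * ?S m) * fps_exp c"
    by (simp only: fps_deriv_mult fps_exp_deriv) (simp add: algebra_simps)
  also have "fps_deriv (?S m) + fps_const c * ?S m = ?S (Suc m)"
    unfolding d cS S' by (simp add: algebra_simps)
  finally show ?case .
qed

lemma nth_deriv_nth:
  fixes F :: "real fps"
  shows "fps_nth_deriv m F $ n = fact (n + m) / fact n * F $ (n + m)"
proof (induction m arbitrary: F n)
  case 0
  then show ?case by simp
next
  case (Suc m)
  have "fps_nth_deriv (Suc m) F $ n = fps_nth_deriv m (fps_deriv F) $ n" by simp
  also have "\<dots> = fact (n + m) / fact n * (of_nat (n + m + 1) * F $ (n + m + 1))"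
    by (simp only: Suc fps_deriv_nth)
  also have "\<dots> = fact (n + Suc m) / fact n * F $ (n + Suc m)"
    by (simp add: field_simps)
  finally show ?case .
qed

lemma fact_mult_nth:
  fixes F H :: "real fps"
  shows "fact n * (F * H) $ n = (\<Sum>i=0..n. of_nat (n choose i) * (fact i * F $ i) * (fact (n - i) * H $ (n - i)))"
  unfolding fps_mult_nth sum_distrib_left
  by (intro sum.cong refl) (simp add: binomial_fact field_simps)

lemma fps_const_prod: "finite A \<Longrightarrow> fps_const (\<Prod>p\<in>A. f p) = (\<Prod>p\<in>A. fps_const (f p) :: real fps)"
  by (induction rule: finite_induct) (simp_all add: fps_const_mult[symmetric] del: fps_const_mult)

lemma pos_comps_sub: "pos_comps k j \<subseteq> comps {1..k} j"
  unfolding pos_comps_def comps_def by auto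

lemma pos_comps_low: "j < k \<Longrightarrow> pos_comps k j = {}"
proof (rule ccontr)
  assume "j < k" "pos_comps k j \<noteq> {}"
  then obtain l where l: "l \<in> pos_comps k j" by auto
  have "(\<Sum>p\<in>{1..k}. (1::nat)) \<le> (\<Sum>p\<in>{1..k}. l p)"
    using l unfolding pos_comps_def by (intro sum_mono) auto
  then show False using l \<open>j < k\<close> unfolding pos_comps_def by simp
qed

lemma Rk_expand:
  "Rk M k j = (\<Sum>l\<in>pos_comps k j. fps_const (real (multinom j k l)) * (\<Prod>p\<in>{1..k}. fps_nth_deriv (l p) M))"
proof -
  have Qk: "Qf M ^ k = (\<Prod>p\<in>{1..k}. Qf M)" by simp
  have "(Qf M ^ k) $ j = (\<Sum>e\<in>comps {1..k} j. \<Prod>p\<in>{1..k}. Qf M $ e p)"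
    unfolding Qk by (rule fps_prod_nth) simp
  also have "\<dots> = (\<Sum>e\<in>pos_comps k j. \<Prod>p\<in>{1..k}. Qf M $ e p)"
  proof (rule sum.mono_neutral_right[OF finite_comps pos_comps_sub])
    show "finite {1..k}" by simp
    show "\<forall>e\<in>comps {1..k} j - pos_comps k j. (\<Prod>p\<in>{1..k}. Qf M $ e p) = 0"
    proof
      fix e assume e: "e \<in> comps {1..k} j - pos_comps k j"
      then obtain p where "p \<in> {1..k}" "e p = 0" unfolding comps_def pos_comps_def by auto
      then show "(\<Prod>p\<in>{1..k}. Qf M $ e p) = 0"
        by (intro prod_zero bexI[of _ p]) (auto simp: Qf_nth)
    qed
  qed
  finally have "Rk M k j = (\<Sum>e\<in>pos_comps k j. fps_const (fact j) * (\<Prod>p\<in>{1..k}. Qf M $ e p))"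
    unfolding Rk_def by (simp add: sum_distrib_left)
  also have "\<dots> = (\<Sum>l\<in>pos_comps k j. fps_const (real (multinom j k l)) * (\<Prod>p\<in>{1..k}. fps_nth_deriv (l p) M))"
  proof (intro sum.cong refl)
    fix l assume l: "l \<in> pos_comps k j"
    then have pos: "\<forall>p\<in>{1..k}. l p \<noteq> 0" and sj: "sum l {1..k} = j"
      unfolding pos_comps_def by auto
    have "(\<Prod>p\<in>{1..k}. Qf M $ l p) = (\<Prod>p\<in>{1..k}. fps_const (1 / fact (l p)) * fps_nth_deriv (l p) M)"
    proof (intro prod.cong refl)
      fix p assume "p \<in> {1..k}"
      then have "l p \<noteq> 0" using pos by auto
      then show "Qf M $ l p = fps_const (1 / fact (l p)) * fps_nth_deriv (l p) M" by (simp add: Qf_nth)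
    qed
    also have "\<dots> = fps_const (\<Prod>p\<in>{1..k}. 1 / fact (l p)) * (\<Prod>p\<in>{1..k}. fps_nth_deriv (l p) M)"
      by (simp add: prod.distrib fps_const_prod)
    finally have 1: "(\<Prod>p\<in>{1..k}. Qf M $ l p) = \<dots>" .
    have dv: "(\<Prod>p\<in>{1..k}. fact (l p) :: nat) dvd fact j"
      using prod_fact_dvd[of "{1..k}" l] sj by simp
    have "real (multinom j k l) = fact j / (\<Prod>p\<in>{1..k}. fact (l p))"
      unfolding multinom_def real_of_nat_div[OF dv] by (simp add: of_nat_prod)
    then have 2: "fact j * (\<Prod>p\<in>{1..k}. 1 / fact (l p)) = real (multinom j k l)"
      by (simp add: prod_dividef)
    show "fps_const (fact j) * (\<Prod>p\<in>{1..k}. Qf M $ l p) =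
          fps_const (real (multinom j k l)) * (\<Prod>p\<in>{1..k}. fps_nth_deriv (l p) M)"
      unfolding 1 2[symmetric] by (simp add: mult.assoc)
  qed
  finally show ?thesis .
qed

lemma exp_ge_pow:
  fixes z :: real
  assumes "0 \<le> z"
  shows "z ^ q / fact q \<le> exp z"
proof -
  have "(\<Sum>n\<in>{q}. inverse (fact n) * z ^ n) \<le> (\<Sum>n. inverse (fact n) * z ^ n)"
    using assms by (intro sum_le_suminf[OF summable_exp]) auto
  then show ?thesis by (simp add: exp_def field_simps)
qed

context prob_space
begin

lemma moment_integrable:
  fixes Y :: "'a \<Rightarrow> real"
  assumes Y: "Y \<in> borel_measurable M"
    and mgf: "\<exists>r0>0. \<forall>t. \<bar>t\<bar> < r0 \<longrightarrow> integrable M (\<lambda>\<omega>. exp (t * Y \<omega>))"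
  shows "integrable M (\<lambda>\<omega>. Y \<omega> ^ q)"
proof -
  obtain r0 where r0: "r0 > 0" "\<forall>t. \<bar>t\<bar> < r0 \<longrightarrow> integrable M (\<lambda>\<omega>. exp (t * Y \<omega>))"
    using mgf by auto
  define t where "t = r0 / 2"
  have t: "t > 0" "\<bar>t\<bar> < r0" "\<bar>-t\<bar> < r0" using r0 unfolding t_def by auto
  have i1: "integrable M (\<lambda>\<omega>. exp (t * Y \<omega>))" and i2: "integrable M (\<lambda>\<omega>. exp ((-t) * Y \<omega>))"
    using r0(2) t by blast+
  let ?f = "\<lambda>\<omega>. fact q / t ^ q * (exp (t * Y \<omega>) + exp ((-t) * Y \<omega>))"
  show ?thesis
  proof (rule Bochner_Integration.integrable_bound)
    show "integrable M ?f" using i1 i2 by auto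
    show "(\<lambda>\<omega>. Y \<omega> ^ q) \<in> borel_measurable M" using Y by measurable
    show "AE \<omega> in M. norm (Y \<omega> ^ q) \<le> norm (?f \<omega>)"
    proof (intro AE_I2)
      fix \<omega>
      let ?z = "t * \<bar>Y \<omega>\<bar>"
      have z0: "0 \<le> ?z" using t by simp
      have "?z ^ q / fact q \<le> exp ?z" by (rule exp_ge_pow[OF z0])
      also have "exp ?z \<le> exp (t * Y \<omega>) + exp ((-t) * Y \<omega>)"
        using t by (cases "Y \<omega> \<ge> 0") (auto simp: add_increasing add_increasing2)
      finally have "?z ^ q \<le> fact q * (exp (t * Y \<omega>) + exp ((-t) * Y \<omega>))"
        by (simp add: field_simps)
      then have "t ^ q * \<bar>Y \<omega>\<bar> ^ q \<le> fact q * (exp (t * Y \<omega>) + exp ((-t) * Y \<omega>))"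
        by (simp add: power_mult_distrib)
      then have "\<bar>Y \<omega>\<bar> ^ q \<le> fact q / t ^ q * (exp (t * Y \<omega>) + exp ((-t) * Y \<omega>))"
        using t by (simp add: field_simps)
      moreover have "0 \<le> fact q / t ^ q * (exp (t * Y \<omega>) + exp ((-t) * Y \<omega>))"
        using t by (intro mult_nonneg_nonneg add_nonneg_nonneg) auto
      ultimately show "norm (Y \<omega> ^ q) \<le> norm (?f \<omega>)"
        using t by (simp add: power_abs)
    qed
  qed
qed

lemma Ys_moment:
  fixes Y :: "'a \<Rightarrow> real" and Ys :: "nat \<Rightarrow> 'a \<Rightarrow> real"
  assumes Y: "Y \<in> borel_measurable M"
    and mgf: "\<exists>r0>0. \<forall>t. \<bar>t\<bar> < r0 \<longrightarrow> integrable M (\<lambda>\<omega>. exp (t * Y \<omega>))"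
    and Ysm: "Ys j \<in> borel_measurable M"
    and dist: "distr M borel (Ys j) = distr M borel Y"
  shows "integrable M (\<lambda>\<omega>. Ys j \<omega> ^ q)" "(\<integral>\<omega>. Ys j \<omega> ^ q \<partial>M) = (\<integral>\<omega>. Y \<omega> ^ q \<partial>M)"
proof -
  have "integrable (distr M borel Y) (\<lambda>z. z ^ q)"
    using moment_integrable[OF Y mgf] Y by (subst integrable_distr_eq) auto
  then have "integrable (distr M borel (Ys j)) (\<lambda>z::real. z ^ q)" using dist by simp
  then show "integrable M (\<lambda>\<omega>. Ys j \<omega> ^ q)"
    using Ysm by (subst (asm) integrable_distr_eq) auto
  have "(\<integral>\<omega>. Ys j \<omega> ^ q \<partial>M) = integral\<^sup>L (distr M borel (Ys j)) (\<lambda>z. z ^ q)"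
    using Ysm by (subst integral_distr) auto
  also have "\<dots> = integral\<^sup>L (distr M borel Y) (\<lambda>z. z ^ q)" using dist by simp
  also have "\<dots> = (\<integral>\<omega>. Y \<omega> ^ q \<partial>M)"
    using Y by (subst integral_distr) auto
  finally show "(\<integral>\<omega>. Ys j \<omega> ^ q \<partial>M) = (\<integral>\<omega>. Y \<omega> ^ q \<partial>M)" .
qed

lemma PL:
  fixes Y :: "'a \<Rightarrow> real" and Ys :: "nat \<Rightarrow> 'a \<Rightarrow> real"
  assumes Y: "Y \<in> borel_measurable M"
    and mgf: "\<exists>r0>0. \<forall>t. \<bar>t\<bar> < r0 \<longrightarrow> integrable M (\<lambda>\<omega>. exp (t * Y \<omega>))"
    and Ysm: "\<And>j. j \<ge> 1 \<Longrightarrow> Ys j \<in> borel_measurable M"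
    and ind: "indep_vars (\<lambda>_. borel) Ys {1..}"
    and dist: "\<And>j. j \<ge> 1 \<Longrightarrow> distr M borel (Ys j) = distr M borel Y"
  shows "fact a * (\<Prod>p\<in>{1..k}. fps_nth_deriv (l p) (mgf_fps M Y)) $ a =
    (\<integral>\<omega>. (\<Sum>p=1..k. Ys p \<omega>) ^ a * (\<Prod>p=1..k. Ys p \<omega> ^ l p) \<partial>M)"
proof -
  let ?\<mu> = "\<lambda>q. (\<integral>\<omega>. Y \<omega> ^ q \<partial>M)"
  let ?C = "comps {1..k} a"
  let ?X = "\<lambda>e p \<omega>. Ys p \<omega> ^ (e p + l p) / fact (e p)"
  have dn: "fps_nth_deriv q (mgf_fps M Y) $ e = ?\<mu> (e + q) / fact e" for q e
    by (simp add: nth_deriv_nth mgf_fps_def)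
  have lhs: "fact a * (\<Prod>p\<in>{1..k}. fps_nth_deriv (l p) (mgf_fps M Y)) $ a =
      (\<Sum>e\<in>?C. fact a * (\<Prod>p\<in>{1..k}. ?\<mu> (e p + l p) / fact (e p)))"
    by (simp add: fps_prod_nth dn sum_distrib_left)
  have pw: "(\<Sum>p=1..k. Ys p \<omega>) ^ a * (\<Prod>p=1..k. Ys p \<omega> ^ l p) =
      (\<Sum>e\<in>?C. fact a * (\<Prod>p\<in>{1..k}. ?X e p \<omega>))" for \<omega>
  proof -
    have "(\<Sum>p=1..k. Ys p \<omega>) ^ a * (\<Prod>p=1..k. Ys p \<omega> ^ l p) =
      (\<Sum>e\<in>?C. fact a * ((\<Prod>p\<in>{1..k}. Ys p \<omega> ^ e p / fact (e p)) * (\<Prod>p=1..k. Ys p \<omega> ^ l p)))"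
      by (simp add: power_sum_multinomial sum_distrib_left sum_distrib_right mult.assoc)
    also have "\<dots> = (\<Sum>e\<in>?C. fact a * (\<Prod>p\<in>{1..k}. ?X e p \<omega>))"
      by (intro sum.cong refl) (simp add: prod.distrib[symmetric] power_add)
    finally show ?thesis .
  qed
  have sub: "{1..k} \<subseteq> {1::nat..}" by auto
  have indX: "indep_vars (\<lambda>_. borel) (?X e) {1..k}" for e
    using indep_vars_compose2[OF indep_vars_subset[OF ind sub],
        where Y = "\<lambda>p z. z ^ (e p + l p) / fact (e p)" and N = "\<lambda>_. borel"]
    by simp
  have intX: "integrable M (?X e p)" if "p \<in> {1..k}" for e p
  proof -
    have p1: "1 \<le> p" using that by auto
    show ?thesis using Ys_moment(1)[where Ys=Ys and j=p and q="e p + l p", OF Y mgf Ysm[OF p1] dist[OF p1]] by auto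
  qed
  have intgX: "(\<integral>\<omega>. ?X e p \<omega> \<partial>M) = ?\<mu> (e p + l p) / fact (e p)" if "p \<in> {1..k}" for e p
  proof -
    have p1: "1 \<le> p" using that by auto
    show ?thesis using Ys_moment(2)[where Ys=Ys and j=p and q="e p + l p", OF Y mgf Ysm[OF p1] dist[OF p1]] by auto
  qed
  have "(\<integral>\<omega>. (\<Sum>p=1..k. Ys p \<omega>) ^ a * (\<Prod>p=1..k. Ys p \<omega> ^ l p) \<partial>M) =
      (\<integral>\<omega>. (\<Sum>e\<in>?C. fact a * (\<Prod>p\<in>{1..k}. ?X e p \<omega>)) \<partial>M)"
    unfolding pw ..
  also have "\<dots> = (\<Sum>e\<in>?C. \<integral>\<omega>. fact a * (\<Prod>p\<in>{1..k}. ?X e p \<omega>) \<partial>M)"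
    by (rule Bochner_Integration.integral_sum) (intro integrable_mult_right indep_vars_integrable[OF _ indX] intX; simp)
  also have "\<dots> = (\<Sum>e\<in>?C. fact a * (\<Prod>p\<in>{1..k}. ?\<mu> (e p + l p) / fact (e p)))"
  proof (intro sum.cong refl)
    fix e
    have "(\<integral>\<omega>. (\<Prod>p\<in>{1..k}. ?X e p \<omega>) \<partial>M) = (\<Prod>p\<in>{1..k}. \<integral>\<omega>. ?X e p \<omega> \<partial>M)"
      by (rule indep_vars_lebesgue_integral[OF _ indX]) (auto intro: intX)
    also have "\<dots> = (\<Prod>p\<in>{1..k}. ?\<mu> (e p + l p) / fact (e p))"
      by (intro prod.cong refl intgX)
    finally show "(\<integral>\<omega>. fact a * (\<Prod>p\<in>{1..k}. ?X e p \<omega>) \<partial>M) =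
        fact a * (\<Prod>p\<in>{1..k}. ?\<mu> (e p + l p) / fact (e p))" by simp
  qed
  finally show ?thesis using lhs by simp
qed

end

theorem theorem2p4:
  fixes M :: "'a measure" and Y :: "'a \<Rightarrow> real" and Ys :: "nat \<Rightarrow> 'a \<Rightarrow> real"
    and r :: nat and x y :: real and m n :: nat
  assumes "prob_space M"
    and "Y \<in> borel_measurable M"
    and "\<exists>r0>0. \<forall>t. \<bar>t\<bar> < r0 \<longrightarrow> integrable M (\<lambda>\<omega>. exp (t * Y \<omega>))"
    and "\<And>j. j \<ge> 1 \<Longrightarrow> Ys j \<in> borel_measurable M"
    and "prob_space.indep_vars M (\<lambda>_. borel) Ys {1..}"
    and "\<And>j. j \<ge> 1 \<Longrightarrow> distr M borel (Ys j) = distr M borel Y"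
    and "r > 0"
  shows "phi M Y (m + n) r x y =
    (\<Sum>i=0..n. \<Sum>k=0..m.
       real (n choose i) * phi M Y i r (x - real k) y * (falling_fact x k * y ^ k / fact k) *
       (\<Sum>j=k..m. \<Sum>l\<in>pos_comps k j.
          real (m choose j) * real (multinom j k l) * real r ^ (m - j) *
          (\<integral>\<omega>. (\<Sum>p=1..k. Ys p \<omega>) ^ (n - i) * (\<Prod>p=1..k. Ys p \<omega> ^ l p) \<partial>M)))"
proof -
  interpret P: prob_space M by fact
  let ?MY = "mgf_fps M Y" and ?E = "fps_exp (real r)"
  have M0: "?MY $ 0 = 1" by (simp add: mgf_fps_def P.prob_space)
  define I where "I k a l = (\<integral>\<omega>. (\<Sum>p=1..k. Ys p \<omega>) ^ a * (\<Prod>p=1..k. Ys p \<omega> ^ l p) \<partial>M)"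
    for k a and l :: "nat \<Rightarrow> nat"
  define W where "W k j a = (\<Sum>l\<in>pos_comps k j. real (multinom j k l) * I k a l)" for k j a
  have phik: "phi M Y i r (x - real k) y = fact i * (Ak ?MY x y k * ?E) $ i" for i k
    by (simp add: phi_def phi_gen_def Ak_def)
  have RW: "fact a * Rk ?MY k j $ a = W k j a" for k j a
  proof -
    have "fact a * Rk ?MY k j $ a = (\<Sum>l\<in>pos_comps k j. real (multinom j k l) *
        (fact a * (\<Prod>p\<in>{1..k}. fps_nth_deriv (l p) ?MY) $ a))"
      unfolding Rk_expand by (simp add: fps_sum_nth sum_distrib_left mult_ac)
    also have "\<dots> = W k j a"
      unfolding W_def I_def
      by (intro sum.cong refl arg_cong2[where f = "(*)"] P.PL assms(2-6)) auto
    finally show ?thesis .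
  qed
  have Wlow: "j < k \<Longrightarrow> W k j a = 0" for j k a by (simp add: W_def pos_comps_low)
  define F where "F i k j = real (n choose i) * phi M Y i r (x - real k) y * ck x y k *
      (real (m choose j) * real r ^ (m - j) * W k j (n - i))" for i k j
  have "phi M Y (m + n) r x y = fact n * (fps_nth_deriv m (Ak ?MY x y 0 * ?E)) $ n"
    by (simp add: phi_def phi_gen_def Ak_def nth_deriv_nth add.commute)
  also have "fps_nth_deriv m (Ak ?MY x y 0 * ?E) = (\<Sum>j\<le>m. \<Sum>k\<le>m.
      fps_const (real (m choose j) * real r ^ (m - j)) * fps_const (ck x y k) * ((Ak ?MY x y k * ?E) * Rk ?MY k j))"
    unfolding deriv_mult_exp sum_distrib_right
  proof (intro sum.cong refl)
    fix j assume "j \<in> {..m}"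
    then have "fps_nth_deriv j (Ak ?MY x y 0) = (\<Sum>k\<le>m. fps_const (ck x y k) * Ak ?MY x y k * Rk ?MY k j)"
      by (intro main_deriv[OF M0]) auto
    then show "fps_const (of_nat (m choose j) * real r ^ (m - j)) * fps_nth_deriv j (Ak ?MY x y 0) * ?E =
      (\<Sum>k\<le>m. fps_const (real (m choose j) * real r ^ (m - j)) * fps_const (ck x y k) * ((Ak ?MY x y k * ?E) * Rk ?MY k j))"
      by (simp add: sum_distrib_left sum_distrib_right mult_ac del: fps_const_mult)
  qed
  also have "fact n * (\<Sum>j\<le>m. \<Sum>k\<le>m.
      fps_const (real (m choose j) * real r ^ (m - j)) * fps_const (ck x y k) * ((Ak ?MY x y k * ?E) * Rk ?MY k j)) $ n
    = (\<Sum>j\<le>m. \<Sum>k\<le>m. real (m choose j) * real r ^ (m - j) * ck x y k * (fact n * ((Ak ?MY x y k * ?E) * Rk ?MY k j) $ n))"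
    by (simp only: fps_sum_nth sum_distrib_left mult.assoc fps_mult_left_const_nth) (simp add: mult_ac)
  also have "\<dots> = (\<Sum>j\<le>m. \<Sum>k\<le>m. \<Sum>i=0..n. F i k j)"
  proof (intro sum.cong refl)
    fix j k
    show "real (m choose j) * real r ^ (m - j) * ck x y k * (fact n * ((Ak ?MY x y k * ?E) * Rk ?MY k j) $ n)
      = (\<Sum>i=0..n. F i k j)"
      unfolding fact_mult_nth F_def phik RW sum_distrib_left
      by (intro sum.cong refl) (simp add: mult_ac)
  qed
  also have "\<dots> = (\<Sum>i=0..n. \<Sum>k=0..m. \<Sum>j=0..m. F i k j)"
  proof -
    have "(\<Sum>j\<le>m. \<Sum>k\<le>m. \<Sum>i=0..n. F i k j) = (\<Sum>j\<le>m. \<Sum>i=0..n. \<Sum>k\<le>m. F i k j)"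
      by (intro sum.cong refl sum.swap)
    also have "\<dots> = (\<Sum>i=0..n. \<Sum>j\<le>m. \<Sum>k\<le>m. F i k j)"
      by (rule sum.swap)
    also have "\<dots> = (\<Sum>i=0..n. \<Sum>k\<le>m. \<Sum>j\<le>m. F i k j)"
      by (intro sum.cong refl sum.swap)
    finally show ?thesis by (simp add: atMost_atLeast0)
  qed
  also have "\<dots> = (\<Sum>i=0..n. \<Sum>k=0..m. real (n choose i) * phi M Y i r (x - real k) y * (falling_fact x k * y ^ k / fact k) *
       (\<Sum>j=k..m. \<Sum>l\<in>pos_comps k j.
          real (m choose j) * real (multinom j k l) * real r ^ (m - j) *
          (\<integral>\<omega>. (\<Sum>p=1..k. Ys p \<omega>) ^ (n - i) * (\<Prod>p=1..k. Ys p \<omega> ^ l p) \<partial>M)))"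
  proof (intro sum.cong refl)
    fix i k
    have "(\<Sum>j=0..m. F i k j) = (\<Sum>j=k..m. F i k j)"
      by (rule sum.mono_neutral_right) (auto simp: F_def Wlow)
    also have "\<dots> = real (n choose i) * phi M Y i r (x - real k) y * (falling_fact x k * y ^ k / fact k) *
       (\<Sum>j=k..m. \<Sum>l\<in>pos_comps k j.
          real (m choose j) * real (multinom j k l) * real r ^ (m - j) *
          (\<integral>\<omega>. (\<Sum>p=1..k. Ys p \<omega>) ^ (n - i) * (\<Prod>p=1..k. Ys p \<omega> ^ l p) \<partial>M))"
      unfolding F_def W_def I_def ck_def sum_distrib_left by (intro sum.cong refl) (simp add: mult_ac)
    finally show "(\<Sum>j=0..m. F i k j) = real (n choose i) * phi M Y i r (x - real k) y * (falling_fact x k * y ^ k / fact k) *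
       (\<Sum>j=k..m. \<Sum>l\<in>pos_comps k j.
          real (m choose j) * real (multinom j k l) * real r ^ (m - j) *
          (\<integral>\<omega>. (\<Sum>p=1..k. Ys p \<omega>) ^ (n - i) * (\<Prod>p=1..k. Ys p \<omega> ^ l p) \<partial>M))" .
  qed
  finally show ?thesis .
qed

end
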